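(* Let $R$ be an associative ring with identity $1$ and an involution $*$, and let $p,q\in R$ be projections. Then the following are equivalent: (1) $p(1-q)$ and $(1-p)q$ are both MP invertible; (2) $p-q$ is MP invertible.
   Context: An involution on $R$ is a map $a\mapsto a^*$ with $(a^* )^*=a$, $(a+b)^*=a^*+b^*$, $(ab)^*=b^*a^*$. An element $a$ is MP invertible if there is $b$ with $aba=a$, $bab=b$, $(ab)^*=ab$, $(ba)^*=ba$; this $b$ is unique and written $a^{\dagger}$. A projection is an element $p$ with $p^2=p=p^*$. *)

theory Defs
  imports Main
begin

class ring_invol = ring_1 +
  fixes invol :: "'a \<Rightarrow> 'a"
  assumes invol_invol: "invol (invol a) = a"
    and invol_add: "invol (a + b) = invol a + invol b"
    and invol_mult: "invol (a * b) = invol b * invol a"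

definition mp_inverse_of :: "'a::ring_invol \<Rightarrow> 'a \<Rightarrow> bool" where
  "mp_inverse_of a b \<longleftrightarrow> a * b * a = a \<and> b * a * b = b \<and>
     invol (a * b) = a * b \<and> invol (b * a) = b * a"

definition mp_invertible :: "'a::ring_invol \<Rightarrow> bool" where
  "mp_invertible a \<longleftrightarrow> (\<exists>b. mp_inverse_of a b)"

definition projection :: "'a::ring_invol \<Rightarrow> bool" where
  "projection p \<longleftrightarrow> p * p = p \<and> invol p = p"

end

theory Submission
  imports Defs
begin

lemma invol_0: "invol (0::'a::ring_invol) = 0"
proof -
  have "invol (0::'a) = invol (0 + 0)" by simp
  also have "\<dots> = invol 0 + invol 0" by (rule invol_add)
  finally show ?thesis by simp
qed

lemma invol_neg: "invol (- (x::'a::ring_invol)) = - invol x"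
proof -
  have "invol (- x) + invol x = invol (-x + x)" by (rule invol_add[symmetric])
  also have "\<dots> = 0" by (simp add: invol_0)
  finally show ?thesis by (simp add: eq_neg_iff_add_eq_0)
qed

lemma invol_diff: "invol ((x::'a::ring_invol) - y) = invol x - invol y"
  using invol_add[of x "-y"] by (simp add: invol_neg)

lemma invol_1: "invol (1::'a::ring_invol) = 1"
  by (metis invol_invol invol_mult mult_1_right mult_1_left)

lemma mp_unique:
  fixes a b b' :: "'a::ring_invol"
  assumes b: "mp_inverse_of a b" and b': "mp_inverse_of a b'"
  shows "b = b'"
proof -
  from b have b1: "a*b*a = a" "b*a*b = b" "invol (a*b) = a*b" "invol (b*a) = b*a"
    by (auto simp: mp_inverse_of_def)
  from b' have b2: "a*b'*a = a" "b'*a*b' = b'" "invol (a*b') = a*b'" "invol (b'*a) = b'*a"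
    by (auto simp: mp_inverse_of_def)
  have "b = b * (a*b)" using b1 by (simp add: mult.assoc)
  also have "\<dots> = b * ((a*b'*a)*b)" by (simp only: b2(1))
  also have "\<dots> = b * (invol (a*b') * invol (a*b))" using b1(3) b2(3) by (simp add: mult.assoc)
  also have "\<dots> = b * invol ((a*b)*(a*b'))" by (simp add: invol_mult)
  also have "\<dots> = b * invol (a*b')" using b1 by (simp add: mult.assoc[symmetric])
  also have "\<dots> = b*a*b'" using b2 by (simp add: mult.assoc)
  finally have e1: "b = b*a*b'" .
  have "b' = (b'*a)*b'" using b2 by simp
  also have "\<dots> = (b'*(a*b*a))*b'" by (simp only: b1(1))
  also have "\<dots> = (invol (b'*a) * invol (b*a))*b'" using b1(4) b2(4) by (simp add: mult.assoc)
  also have "\<dots> = invol ((b*a)*(b'*a))*b'" by (simp add: invol_mult)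
  also have "\<dots> = invol (b*a)*b'" using b2 by (simp add: mult.assoc)
  also have "\<dots> = b*a*b'" using b1 by simp
  finally show ?thesis using e1 by simp
qed

lemma mp_neg:
  fixes a b :: "'a::ring_invol"
  assumes "mp_inverse_of a b" shows "mp_inverse_of (-a) (-b)"
  using assms by (simp add: mp_inverse_of_def)

lemma mp_invol_selfadj:
  fixes c d :: "'a::ring_invol"
  assumes d: "mp_inverse_of c d" and c: "invol c = c"
  shows "invol d = d"
proof -
  from d have b1: "c*d*c = c" "d*c*d = d" "invol (c*d) = c*d" "invol (d*c) = d*c"
    by (auto simp: mp_inverse_of_def)
  have "mp_inverse_of c (invol d)"
    unfolding mp_inverse_of_def
  proof (intro conjI)
    have "invol (c*d*c) = c*invol d*c" using c by (simp add: invol_mult mult.assoc)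
    then show "c*invol d*c = c" using b1 c by simp
    have "invol (d*c*d) = invol d*c*invol d" using c by (simp add: invol_mult mult.assoc)
    then show "invol d*c*invol d = invol d" using b1 by simp
    have h1: "c * invol d = d*c" using b1 c invol_mult[of d c] by simp
    have h2: "invol d * c = c*d" using b1 c invol_mult[of c d] by simp
    show "invol (c * invol d) = c * invol d" using h1 b1 by simp
    show "invol (invol d * c) = invol d * c" using h2 b1 by simp
  qed
  from mp_unique[OF this d] show ?thesis .
qed

lemma comm_e:
  fixes c d x :: "'a::ring_invol"
  assumes d: "mp_inverse_of c d" and cd: "c*d = d*c" and xs: "x*(c*c) = (c*c)*x"
  shows "x*(c*d) = (c*d)*x"
proof -
  from d have b1: "c*d*c = c" "d*c*d = d"
    by (auto simp: mp_inverse_of_def)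
  define s where "s = c*c"
  define t where "t = d*d"
  define e where "e = c*d"
  have est: "e = s*t"
  proof -
    have "s*t = c*(c*d)*d" by (simp add: s_def t_def mult.assoc)
    also have "\<dots> = c*(d*c)*d" using cd by simp
    also have "\<dots> = (c*d*c)*d" by (simp add: mult.assoc)
    also have "\<dots> = e" using b1 by (simp add: e_def)
    finally show ?thesis by simp
  qed
  have ets: "e = t*s"
  proof -
    have "t*s = d*(d*c)*c" by (simp add: s_def t_def mult.assoc)
    also have "\<dots> = d*(c*d)*c" using cd by simp
    also have "\<dots> = (d*c*d)*c" by (simp add: mult.assoc)
    also have "\<dots> = e" using b1 cd by (simp add: e_def)
    finally show ?thesis by simp
  qed
  have es: "e*s = s"
    using b1 by (simp add: e_def s_def mult.assoc[symmetric])
  have se: "s*e = s"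
  proof -
    have "s*e = c*c*(d*c)" using cd by (simp add: s_def e_def)
    also have "\<dots> = c*(c*d*c)" by (simp add: mult.assoc)
    finally have "s*e = c*(c*d*c)" .
    then show ?thesis using b1 by (simp add: s_def)
  qed
  have xs': "x*s = s*x" using xs by (simp add: s_def)
  have xe: "x*e = s*x*t" using est xs' by (simp add: mult.assoc[symmetric])
  have ex: "e*x = t*x*s" using ets xs' by (simp add: mult.assoc)
  have "e*x*e = x*e"
  proof -
    have "e*x*e = e*(x*e)" by (simp add: mult.assoc)
    also have "\<dots> = (e*s)*x*t" using xe by (simp add: mult.assoc)
    also have "\<dots> = x*e" using es xe by simp
    finally show ?thesis .
  qed
  moreover have "e*x*e = e*x"
  proof -
    have "e*x*e = t*x*(s*e)" using ex by (simp add: mult.assoc)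
    also have "\<dots> = e*x" using se ex by simp
    finally show ?thesis .
  qed
  ultimately show ?thesis by (simp add: e_def)
qed

lemma mp_part:
  fixes c d x y :: "'a::ring_invol"
  assumes d: "mp_inverse_of c d" and cd: "c*d = d*c"
    and xe: "x*(c*d) = (c*d)*x" and ye: "y*(c*d) = (c*d)*y"
    and xx: "x*x = x" and yy: "y*y = y" and xi: "invol x = x" and yi: "invol y = y"
    and xc: "x*c = c*y"
  shows "mp_inverse_of (x*c) (y*d*x)"
proof -
  from d have b1: "c*d*c = c" "d*c*d = d" "invol (c*d) = c*d"
    by (auto simp: mp_inverse_of_def)
  define e where "e = c*d"
  have ec: "e*c = c" using b1 by (simp add: e_def)
  have ed: "e*d = d" using b1 cd by (simp add: e_def mult.assoc[symmetric])
  have ei: "invol e = e" using b1 by (simp add: e_def)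
  have xe': "x*e = e*x" and ye': "y*e = e*y" using xe ye by (simp_all add: e_def)
  have xx': "\<And>z. x*(x*z) = x*z" using xx by (simp add: mult.assoc[symmetric])
  have yy': "\<And>z. y*(y*z) = y*z" using yy by (simp add: mult.assoc[symmetric])
  have A: "(x*c)*(y*d*x) = x*e"
  proof -
    have "(x*c)*(y*d*x) = x*(c*y)*d*x" by (simp add: mult.assoc)
    also have "\<dots> = x*(x*c)*d*x" using xc by simp
    also have "\<dots> = x*(x*e)*x" by (simp add: e_def mult.assoc)
    also have "\<dots> = x*e" using xe' xx by (metis mult.assoc)
    finally show ?thesis .
  qed
  have B: "(y*d*x)*(x*c) = y*e"
  proof -
    have "(y*d*x)*(x*c) = y*d*(x*c)" using xx by (simp add: mult.assoc xx')
    also have "\<dots> = y*(d*c)*y" using xc by (simp add: mult.assoc)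
    also have "\<dots> = y*e*y" using cd by (simp add: e_def)
    also have "\<dots> = y*e" using ye' yy by (metis mult.assoc)
    finally show ?thesis .
  qed
  show ?thesis unfolding mp_inverse_of_def
  proof (intro conjI)
    have "x*c*(y*d*x)*(x*c) = (x*e)*(x*c)" using A by simp
    also have "\<dots> = e*(x*(x*c))" using xe' by (simp add: mult.assoc)
    also have "\<dots> = x*(e*c)" using xx' xe' by (simp add: mult.assoc[symmetric])
    also have "\<dots> = x*c" using ec by simp
    finally show "x*c*(y*d*x)*(x*c) = x*c" .
    have "y*d*x*(x*c)*(y*d*x) = (y*e)*(y*(d*x))" using B by (simp add: mult.assoc)
    also have "\<dots> = e*(y*(y*(d*x)))" using ye' by (simp add: mult.assoc)
    also have "\<dots> = y*((e*d)*x)" using yy' ye' by (simp add: mult.assoc[symmetric])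
    also have "\<dots> = y*d*x" using ed by (simp add: mult.assoc)
    finally show "y*d*x*(x*c)*(y*d*x) = y*d*x" .
    show "invol (x*c*(y*d*x)) = x*c*(y*d*x)" using A ei xi xe' by (simp add: invol_mult)
    show "invol (y*d*x*(x*c)) = y*d*x*(x*c)" using B ei yi ye' by (simp add: invol_mult)
  qed
qed

lemma mp_sum:
  fixes a a' b b' :: "'a::ring_invol"
  assumes a: "mp_inverse_of a a'" and b: "mp_inverse_of b b'"
    and ab: "invol a * b = 0" and ab2: "a * invol b = 0"
  shows "mp_inverse_of (a+b) (a'+b')"
proof -
  from a have a1: "a*a'*a = a" "a'*a*a' = a'" "invol (a*a') = a*a'" "invol (a'*a) = a'*a"
    by (auto simp: mp_inverse_of_def)
  from b have b1: "b*b'*b = b" "b'*b*b' = b'" "invol (b*b') = b*b'" "invol (b'*b) = b'*b"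
    by (auto simp: mp_inverse_of_def)
  have ba: "invol b * a = 0" using ab invol_mult[of "invol a" b] by (simp add: invol_invol invol_0)
  have ba2: "b * invol a = 0" using ab2 invol_mult[of a "invol b"] by (simp add: invol_invol invol_0)
  have gen: "x'*y = 0 \<and> y*x' = 0"
    if x: "x*x'*x = x" "x'*x*x' = x'" "invol (x*x') = x*x'" "invol (x'*x) = x'*x"
    and o1: "invol x * y = 0" and o2: "y * invol x = 0"
    for x x' y :: 'a
  proof
    have "x' = x'*(x*x')" using x by (simp add: mult.assoc)
    also have "\<dots> = x'*invol x'*invol x" using x invol_mult[of x x'] by (simp add: mult.assoc)
    finally have "x'*y = x'*invol x'*(invol x*y)" by (metis mult.assoc)
    then show "x'*y = 0" using o1 by simp
    have "x' = (x'*x)*x'" using x by simp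
    also have "\<dots> = invol x*invol x'*x'" using x invol_mult[of x' x] by simp
    finally have "y*x' = (y*invol x)*invol x'*x'" by (metis mult.assoc)
    then show "y*x' = 0" using o2 by simp
  qed
  from gen[OF a1 ab ba2] have A: "a'*b = 0" "b*a' = 0" by auto
  from gen[OF b1 ba ab2] have B: "b'*a = 0" "a*b' = 0" by auto
  have P: "(a+b)*(a'+b') = a*a' + b*b'"
    using A B by (simp add: algebra_simps)
  have Q: "(a'+b')*(a+b) = a'*a + b'*b"
    using A B by (simp add: algebra_simps)
  show ?thesis unfolding mp_inverse_of_def
  proof (intro conjI)
    have "(a*a' + b*b')*(a+b) = a*a'*a + a*(a'*b) + b*(b'*a) + b*b'*b"
      by (simp add: algebra_simps)
    then show "(a+b)*(a'+b')*(a+b) = a+b" using P A B a1 b1 by simp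
    have "(a'*a + b'*b)*(a'+b') = a'*a*a' + a'*(a*b') + b'*(b*a') + b'*b*b'"
      by (simp add: algebra_simps)
    then show "(a'+b')*(a+b)*(a'+b') = a'+b'" using Q A B a1 b1 by simp
    show "invol ((a+b)*(a'+b')) = (a+b)*(a'+b')" using P a1 b1 by (simp add: invol_add)
    show "invol ((a'+b')*(a+b)) = (a'+b')*(a+b)" using Q a1 b1 by (simp add: invol_add)
  qed
qed

theorem theorem2p7:
  fixes p q :: "'a::ring_invol"
  assumes "projection p" and "projection q"
  shows "(mp_invertible (p * (1 - q)) \<and> mp_invertible ((1 - p) * q))
         \<longleftrightarrow> mp_invertible (p - q)"
proof -
  have pp: "p*p = p" "invol p = p" and qq: "q*q = q" "invol q = q"
    using assms by (auto simp: projection_def)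
  have pp': "\<And>z. p*(p*z) = p*z" using pp by (simp add: mult.assoc[symmetric])
  have qq': "\<And>z. q*(q*z) = q*z" using qq by (simp add: mult.assoc[symmetric])
  define c where "c = p - q"
  have ci: "invol c = c" using pp qq by (simp add: c_def invol_diff)
  show ?thesis
  proof
    assume "mp_invertible (p * (1 - q)) \<and> mp_invertible ((1 - p) * q)"
    then obtain a' b' where a': "mp_inverse_of (p * (1 - q)) a'"
      and b': "mp_inverse_of ((1 - p) * q) b'" unfolding mp_invertible_def by blast
    have o1: "invol (p * (1 - q)) * (-((1 - p) * q)) = 0"
      using pp qq by (simp add: invol_mult invol_diff invol_1 algebra_simps pp' qq')
    have o2: "(p * (1 - q)) * invol (-((1 - p) * q)) = 0"
      using pp qq by (simp add: invol_mult invol_diff invol_1 invol_neg algebra_simps pp' qq')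
    from mp_sum[OF a' mp_neg[OF b'] o1 o2]
    have "mp_inverse_of (p * (1 - q) + -((1 - p) * q)) (a' + - b')" .
    moreover have "p * (1 - q) + -((1 - p) * q) = p - q" by (simp add: algebra_simps)
    ultimately show "mp_invertible (p - q)" unfolding mp_invertible_def by auto
  next
    assume "mp_invertible (p - q)"
    then obtain d where d: "mp_inverse_of c d" unfolding mp_invertible_def c_def by blast
    have di: "invol d = d" by (rule mp_invol_selfadj[OF d ci])
    have cd: "c*d = d*c"
    proof -
      have "invol (c*d) = c*d" using d by (simp add: mp_inverse_of_def)
      then show ?thesis using di ci by (simp add: invol_mult)
    qed
    have ps: "p*(c*c) = (c*c)*p" using pp qq
      by (simp add: c_def algebra_simps pp' qq')
    have qs: "q*(c*c) = (c*c)*q" using pp qq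
      by (simp add: c_def algebra_simps pp' qq')
    have pe: "p*(c*d) = (c*d)*p" by (rule comm_e[OF d cd ps])
    have qe: "q*(c*d) = (c*d)*q" by (rule comm_e[OF d cd qs])
    have pe1: "(1-p)*(c*d) = (c*d)*(1-p)" using pe by (simp add: algebra_simps)
    have qe1: "(1-q)*(c*d) = (c*d)*(1-q)" using qe by (simp add: algebra_simps)
    have p1: "(1-p)*(1-p) = 1-p" using pp by (simp add: algebra_simps)
    have q1: "(1-q)*(1-q) = 1-q" using qq by (simp add: algebra_simps)
    have p1i: "invol (1-p) = 1-p" using pp by (simp add: invol_diff invol_1)
    have q1i: "invol (1-q) = 1-q" using qq by (simp add: invol_diff invol_1)
    have xc1: "p*c = c*(1-q)" using pp qq by (simp add: c_def algebra_simps)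
    have xc2: "(1-p)*c = c*q" using pp qq by (simp add: c_def algebra_simps)
    have A: "mp_inverse_of (p*c) ((1-q)*d*p)"
      by (rule mp_part[OF d cd pe qe1 pp(1) q1 pp(2) q1i xc1])
    have B: "mp_inverse_of ((1-p)*c) (q*d*(1-p))"
      by (rule mp_part[OF d cd pe1 qe p1 qq(1) p1i qq(2) xc2])
    have "p*c = p*(1-q)" using pp by (simp add: c_def algebra_simps)
    with A have "mp_invertible (p*(1-q))" unfolding mp_invertible_def by auto
    moreover have "-((1-p)*c) = (1-p)*q" using pp by (simp add: c_def algebra_simps)
    with mp_neg[OF B] have "mp_invertible ((1-p)*q)" unfolding mp_invertible_def by auto
    ultimately show "mp_invertible (p * (1 - q)) \<and> mp_invertible ((1 - p) * q)" by simp
  qed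
qed

end
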